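(* Let $\Gamma$ be a finitely generated group with a splitting $\Gamma=A\ast B$ into two non-trivial groups, such that $A$ contains an element of infinite order. Then for any finite-dimensional Banach $\Gamma$-module $E$, the split classes form an infinite-dimensional subspace of $\mathrm{H}^2_\mathrm{b}(\Gamma,E)$.
   Context: A Banach $\Gamma$-module is a Banach space $E$ with a linear isometric $\Gamma$-action $g.v$. A quasicocycle is a map $f:\Gamma\to E$ with $\sup_{g,h}\|f(gh)-f(g)-g.f(h)\|<\infty$; it is alternating if $f(g)+g.f(g^{-1})=0$ for all $g$; $\mathrm{Q}\mathcal{Z}_{\mathrm{alt}}(\Gamma,E)$ denotes the alternating quasicocycles. $\mathrm{H}^*_\mathrm{b}(\Gamma,E)$ is the cohomology of the bounded bar complex $\ell^\infty(\Gamma^k,E)$ with the usual inhomogeneous coboundary; for a quasicocycle $f$, $\partial f(g,h)=f(g)+g.f(h)-f(gh)$ is a bounded 2-cocycle and $\omega_f:=[\partial f]_\mathrm{b}\in\mathrm{H}^2_\mathrm{b}(\Gamma,E)$. Each $1\neq g\in A\ast B$ has a unique normal form $g=a_1b_1\cdots a_nb_n$ ($a_i\in A$, $b_i\in B$, all non-trivial except possibly $a_1$ or $b_n$). For $f_A\in\mathrm{Q}\mathcal{Z}_{\mathrm{alt}}(A,E)$, $f_B\in\mathrm{Q}\mathcal{Z}_{\mathrm{alt}}(B,E)$ the split quasicocycle is $f_A\ast f_B(1)=0$, $(f_A\ast f_B)(a_1b_1\cdots a_nb_n)=f_A(a_1)+a_1.f_B(b_1)+a_1b_1.f_A(a_2)+\dots+a_1b_1\cdots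 b_{n-1}a_n.f_B(b_n)$. The split classes (for the splitting $A\ast B$) are the classes $\omega_{f_A\ast f_B}$; they form the image of the linear map $(f_A,f_B)\mapsto\omega_{f_A\ast f_B}$. *)

theory Defs
  imports Complex_Main "HOL-Algebra.Generated_Groups"
begin

definition finitely_generated :: "('g, 'b) monoid_scheme \<Rightarrow> bool" where
  "finitely_generated G \<longleftrightarrow>
     (\<exists>S. finite S \<and> S \<subseteq> carrier G \<and> generate G S = carrier G)"

definition infinite_order :: "('g, 'b) monoid_scheme \<Rightarrow> 'g \<Rightarrow> bool" where
  "infinite_order G a \<longleftrightarrow> (\<forall>n::nat. n > 0 \<longrightarrow> a [^]\<^bsub>G\<^esub> n \<noteq> \<one>\<^bsub>G\<^esub>)"

definition reduced_word :: "('g, 'b) monoid_scheme \<Rightarrow> 'g set \<Rightarrow> 'g set \<Rightarrow> 'g list \<Rightarrow> bool" where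
  "reduced_word G A B w \<longleftrightarrow>
     (\<forall>x\<in>set w. x \<in> (A - {\<one>\<^bsub>G\<^esub>}) \<union> (B - {\<one>\<^bsub>G\<^esub>})) \<and>
     (\<forall>i. Suc i < length w \<longrightarrow>
        \<not> (w ! i \<in> A \<and> w ! Suc i \<in> A) \<and> \<not> (w ! i \<in> B \<and> w ! Suc i \<in> B))"

definition word_prod :: "('g, 'b) monoid_scheme \<Rightarrow> 'g list \<Rightarrow> 'g" where
  "word_prod G w = foldr (\<lambda>x y. x \<otimes>\<^bsub>G\<^esub> y) w \<one>\<^bsub>G\<^esub>"

definition free_product_splitting :: "('g, 'b) monoid_scheme \<Rightarrow> 'g set \<Rightarrow> 'g set \<Rightarrow> bool" where
  "free_product_splitting G A B \<longleftrightarrow>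
     subgroup A G \<and> subgroup B G \<and> A \<inter> B = {\<one>\<^bsub>G\<^esub>} \<and>
     (\<forall>g\<in>carrier G. \<exists>!w. reduced_word G A B w \<and> word_prod G w = g)"

definition normal_form :: "('g, 'b) monoid_scheme \<Rightarrow> 'g set \<Rightarrow> 'g set \<Rightarrow> 'g \<Rightarrow> 'g list" where
  "normal_form G A B g = (THE w. reduced_word G A B w \<and> word_prod G w = g)"

definition finite_dimensional_space :: "'e::real_vector itself \<Rightarrow> bool" where
  "finite_dimensional_space TYPE('e) \<longleftrightarrow> (\<exists>S::'e set. finite S \<and> span S = UNIV)"

definition banach_module :: "('g, 'b) monoid_scheme \<Rightarrow> ('g \<Rightarrow> 'e::banach \<Rightarrow> 'e) \<Rightarrow> bool" where
  "banach_module G \<rho> \<longleftrightarrow>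
     (\<forall>g\<in>carrier G. linear (\<rho> g) \<and> (\<forall>v. norm (\<rho> g v) = norm v)) \<and>
     \<rho> \<one>\<^bsub>G\<^esub> = id \<and>
     (\<forall>g\<in>carrier G. \<forall>h\<in>carrier G. \<rho> (g \<otimes>\<^bsub>G\<^esub> h) = \<rho> g \<circ> \<rho> h)"

definition quasicocycle :: "('g, 'b) monoid_scheme \<Rightarrow> 'g set \<Rightarrow> ('g \<Rightarrow> 'e::banach \<Rightarrow> 'e) \<Rightarrow> ('g \<Rightarrow> 'e) \<Rightarrow> bool" where
  "quasicocycle G H \<rho> f \<longleftrightarrow>
     (\<exists>C. \<forall>g\<in>H. \<forall>h\<in>H. norm (f (g \<otimes>\<^bsub>G\<^esub> h) - f g - \<rho> g (f h)) \<le> C)"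

definition alternating :: "('g, 'b) monoid_scheme \<Rightarrow> 'g set \<Rightarrow> ('g \<Rightarrow> 'e::banach \<Rightarrow> 'e) \<Rightarrow> ('g \<Rightarrow> 'e) \<Rightarrow> bool" where
  "alternating G H \<rho> f \<longleftrightarrow> (\<forall>g\<in>H. f g + \<rho> g (f (inv\<^bsub>G\<^esub> g)) = 0)"

definition alt_quasicocycle :: "('g, 'b) monoid_scheme \<Rightarrow> 'g set \<Rightarrow> ('g \<Rightarrow> 'e::banach \<Rightarrow> 'e) \<Rightarrow> ('g \<Rightarrow> 'e) \<Rightarrow> bool" where
  "alt_quasicocycle G H \<rho> f \<longleftrightarrow> quasicocycle G H \<rho> f \<and> alternating G H \<rho> f"

fun split_word :: "'g set \<Rightarrow> ('g \<Rightarrow> 'e::banach \<Rightarrow> 'e) \<Rightarrow> ('g \<Rightarrow> 'e) \<Rightarrow> ('g \<Rightarrow> 'e) \<Rightarrow> 'g list \<Rightarrow> 'e" where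
  "split_word A \<rho> fA fB [] = 0"
| "split_word A \<rho> fA fB (x # xs) = (if x \<in> A then fA x else fB x) + \<rho> x (split_word A \<rho> fA fB xs)"

definition split_quasicocycle ::
  "('g, 'b) monoid_scheme \<Rightarrow> 'g set \<Rightarrow> 'g set \<Rightarrow> ('g \<Rightarrow> 'e::banach \<Rightarrow> 'e) \<Rightarrow> ('g \<Rightarrow> 'e) \<Rightarrow> ('g \<Rightarrow> 'e) \<Rightarrow> 'g \<Rightarrow> 'e" where
  "split_quasicocycle G A B \<rho> fA fB g = split_word A \<rho> fA fB (normal_form G A B g)"

definition cob1 :: "('g, 'b) monoid_scheme \<Rightarrow> ('g \<Rightarrow> 'e::banach \<Rightarrow> 'e) \<Rightarrow> ('g \<Rightarrow> 'e) \<Rightarrow> 'g \<times> 'g \<Rightarrow> 'e" where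
  "cob1 G \<rho> f = (\<lambda>(g, h). f g + \<rho> g (f h) - f (g \<otimes>\<^bsub>G\<^esub> h))"

definition bounded_coboundaries2 :: "('g, 'b) monoid_scheme \<Rightarrow> ('g \<Rightarrow> 'e::banach \<Rightarrow> 'e) \<Rightarrow> ('g \<times> 'g \<Rightarrow> 'e) set" where
  "bounded_coboundaries2 G \<rho> =
     {c. \<exists>\<phi>. (\<exists>C. \<forall>g\<in>carrier G. norm (\<phi> g) \<le> C) \<and>
            (\<forall>g\<in>carrier G. \<forall>h\<in>carrier G. c (g, h) = cob1 G \<rho> \<phi> (g, h))}"

definition split_cocycles :: "('g, 'b) monoid_scheme \<Rightarrow> 'g set \<Rightarrow> 'g set \<Rightarrow> ('g \<Rightarrow> 'e::banach \<Rightarrow> 'e) \<Rightarrow> ('g \<times> 'g \<Rightarrow> 'e) set" where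
  "split_cocycles G A B \<rho> =
     {cob1 G \<rho> (split_quasicocycle G A B \<rho> fA fB) | fA fB.
        alt_quasicocycle G A \<rho> fA \<and> alt_quasicocycle G B \<rho> fB}"

text \<open>The image of the set of cocycles V in H^2_b = Z^2_b / B^2_b is infinite-dimensional:
  for every n there are n classes from V that are linearly independent in H^2_b,
  i.e. no nontrivial linear combination of the representatives is a bounded coboundary.\<close>
definition infinite_dimensional_in_H2b ::
  "('g, 'b) monoid_scheme \<Rightarrow> ('g \<Rightarrow> 'e::banach \<Rightarrow> 'e) \<Rightarrow> ('g \<times> 'g \<Rightarrow> 'e) set \<Rightarrow> bool" where
  "infinite_dimensional_in_H2b G \<rho> V \<longleftrightarrow>
     (\<forall>n::nat. \<exists>c :: nat \<Rightarrow> 'g \<times> 'g \<Rightarrow> 'e. (\<forall>i<n. c i \<in> V) \<and>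
        (\<forall>a :: nat \<Rightarrow> real.
           (\<lambda>x. \<Sum>i<n. a i *\<^sub>R c i x) \<in> bounded_coboundaries2 G \<rho> \<longrightarrow> (\<forall>i<n. a i = 0)))"

end

theory Submission
  imports Defs "HOL-Analysis.Analysis"
begin


lemma lim_from_bound:
  fixes x :: "nat \<Rightarrow> 'a::real_normed_vector"
  assumes "\<forall>n. norm (x n - l) < 1 / Suc n"
  shows "x \<longlonglongrightarrow> l"
proof (rule LIMSEQ_I)
  fix r :: real assume "0 < r"
  then obtain N where N: "1 / Suc N < r" by (rule nat_approx_posE)
  show "\<exists>no. \<forall>n\<ge>no. norm (x n - l) < r"
  proof (intro exI allI impI)
    fix n assume "N \<le> n"
    then have "1 / real (Suc n) \<le> 1 / Suc N" by (simp add: frac_le)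
    then show "norm (x n - l) < r" using assms[rule_format, of n] N by linarith
  qed
qed

lemma cauchy_from_bound:
  fixes x :: "nat \<Rightarrow> 'a::real_normed_vector"
  assumes "\<forall>m n. norm (x m - x n) \<le> c / Suc m + c / Suc n" 
  shows "Cauchy x"
proof (rule CauchyI)
  fix e :: real assume e: "0 < e"
  have c0: "c \<ge> 0" using assms[rule_format, of 0 0] by simp
  have "e / (2 * (c + 1)) > 0" using e c0 by simp
  then obtain N where N: "1 / Suc N < e / (2 * (c + 1))" by (rule nat_approx_posE)
  show "\<exists>M. \<forall>m\<ge>M. \<forall>n\<ge>M. norm (x m - x n) < e"
  proof (intro exI allI impI)
    fix m n assume mn: "N \<le> m" "N \<le> n"
    have a: "c / Suc m \<le> c / Suc N" using mn c0 by (simp add: frac_le)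
    have b: "c / Suc n \<le> c / Suc N" using mn c0 by (simp add: frac_le)
    have "c / Suc N = c * (1 / Suc N)" by simp
    also have "\<dots> \<le> c * (e / (2 * (c + 1)))" using N c0 by (intro mult_left_mono) auto
    also have "\<dots> < e / 2" using e c0 by (simp add: field_simps)
    finally have "c / Suc N < e / 2" .
    then show "norm (x m - x n) < e" using assms[rule_format, of m n] a b by linarith
  qed
qed

lemma coeff_bound:
  fixes B :: "'e::real_normed_vector set"
  assumes "finite B" "independent B"
  shows "\<exists>K>0. \<forall>t. (\<Sum>b\<in>B. \<bar>t b\<bar>) \<le> K * norm (\<Sum>b\<in>B. t b *\<^sub>R b)"
  using assms
proof (induction B rule: finite_induct)
  case empty then show ?case by (auto intro: exI[of _ 1])
next
  case (insert b B)
  from insert.prems insert.hyps have indB: "independent B" and bnot: "b \<notin> span B"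
    by (auto simp: independent_insert)
  obtain K where K0: "K > 0" and K: "\<And>t. (\<Sum>b\<in>B. \<bar>t b\<bar>) \<le> K * norm (\<Sum>b\<in>B. t b *\<^sub>R b)"
    using insert.IH indB by blast
  have "\<exists>d>0. \<forall>u\<in>span B. d \<le> norm (b - u)"
  proof (rule ccontr)
    assume "\<not> ?thesis"
    then have "\<forall>n::nat. \<exists>u\<in>span B. norm (b - u) < 1 / Suc n"
      by (metis not_le of_nat_0_less_iff zero_less_Suc divide_pos_pos zero_less_one)
    then obtain u where u: "\<And>n. u n \<in> span B" "\<And>n. norm (b - u n) < 1 / Suc n" by metis
    have "\<forall>n. \<exists>s. u n = (\<Sum>e\<in>B. s e *\<^sub>R e)"
      using u(1) span_finite[OF insert.hyps(1)] by blast
    then obtain s where s: "\<And>n. u n = (\<Sum>e\<in>B. s n e *\<^sub>R e)" by metis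
    have lim_u: "u \<longlonglongrightarrow> b"
      using u(2) by (intro lim_from_bound) (simp add: norm_minus_commute)
    have cs: "Cauchy (\<lambda>n. s n e)" if "e \<in> B" for e
    proof (rule cauchy_from_bound[where c=K])
      show "\<forall>m n. norm (s m e - s n e) \<le> K / Suc m + K / Suc n"
      proof (intro allI)
        fix m n
        have "norm (s m e - s n e) \<le> (\<Sum>e\<in>B. \<bar>s m e - s n e\<bar>)"
          using that insert.hyps(1) by (simp add: member_le_sum[of e B "\<lambda>e. \<bar>s m e - s n e\<bar>"])
        also have "\<dots> \<le> K * norm (\<Sum>e\<in>B. (s m e - s n e) *\<^sub>R e)" by (rule K)
        also have "(\<Sum>e\<in>B. (s m e - s n e) *\<^sub>R e) = u m - u n"
          by (simp add: s scaleR_diff_left sum_subtractf)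
        also have "u m - u n = (u m - b) + (b - u n)" by simp
        also have "K * norm \<dots> \<le> K * (norm (u m - b) + norm (b - u n))"
          using K0 by (intro mult_left_mono norm_triangle_ineq) auto
        also have "\<dots> \<le> K * (1 / Suc m + 1 / Suc n)"
          using K0 u(2)[of m] u(2)[of n] by (intro mult_left_mono) (auto simp: norm_minus_commute)
        finally show "norm (s m e - s n e) \<le> K / Suc m + K / Suc n" by (simp add: field_simps)
      qed
    qed
    then have "\<forall>e\<in>B. \<exists>l. (\<lambda>n. s n e) \<longlonglongrightarrow> l"
      by (metis Cauchy_convergent_iff convergent_def)
    then obtain sig where sig: "\<And>e. e \<in> B \<Longrightarrow> (\<lambda>n. s n e) \<longlonglongrightarrow> sig e" by metis
    have "(\<lambda>n. \<Sum>e\<in>B. s n e *\<^sub>R e) \<longlonglongrightarrow> (\<Sum>e\<in>B. sig e *\<^sub>R e)"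
      by (intro tendsto_sum tendsto_scaleR sig tendsto_const)
    moreover have "(\<lambda>n. \<Sum>e\<in>B. s n e *\<^sub>R e) = u" using s by auto
    ultimately have "u \<longlonglongrightarrow> (\<Sum>e\<in>B. sig e *\<^sub>R e)" by simp
    then have "b = (\<Sum>e\<in>B. sig e *\<^sub>R e)" using lim_u LIMSEQ_unique by blast
    then have "b \<in> span B" by (simp add: span_sum span_scale span_base)
    with bnot show False by simp
  qed
  then obtain d where d0: "d > 0" and d: "\<And>u. u \<in> span B \<Longrightarrow> d \<le> norm (b - u)" by blast
  define K' where "K' = 1 / d + K * (1 + norm b / d)"
  have K'0: "K' > 0" unfolding K'_def using d0 K0 by (simp add: add_pos_nonneg)
  show ?case
  proof (intro exI[of _ K'] conjI allI K'0)
    fix t :: "'e \<Rightarrow> real"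
    define w where "w = (\<Sum>e\<in>B. t e *\<^sub>R e)"
    define v where "v = t b *\<^sub>R b + w"
    have v_eq: "(\<Sum>e\<in>insert b B. t e *\<^sub>R e) = v"
      using insert.hyps by (simp add: v_def w_def)
    have s_eq: "(\<Sum>e\<in>insert b B. \<bar>t e\<bar>) = \<bar>t b\<bar> + (\<Sum>e\<in>B. \<bar>t e\<bar>)"
      using insert.hyps by simp
    have h1: "\<bar>t b\<bar> * d \<le> norm v"
    proof (cases "t b = 0")
      case True then show ?thesis by simp
    next
      case False
      define u where "u = - (1 / t b) *\<^sub>R w"
      have uin: "u \<in> span B" unfolding u_def w_def
        by (simp add: span_sum span_scale span_base span_neg)
      have "v = t b *\<^sub>R (b - u)" using False by (simp add: v_def u_def scaleR_diff_right scaleR_add_right)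
      then have "norm v = \<bar>t b\<bar> * norm (b - u)" by simp
      moreover have "d \<le> norm (b - u)" using d uin by blast
      ultimately show ?thesis by (simp add: mult_left_mono)
    qed
    have tb: "\<bar>t b\<bar> \<le> norm v / d" using h1 d0 by (simp add: field_simps)
    have "norm w \<le> norm v + \<bar>t b\<bar> * norm b"
    proof -
      have "w = v - t b *\<^sub>R b" by (simp add: v_def)
      then have "norm w \<le> norm v + norm (t b *\<^sub>R b)" by (metis norm_triangle_ineq4)
      then show ?thesis by simp
    qed
    also have "\<dots> \<le> norm v + norm v / d * norm b" using mult_right_mono[OF tb norm_ge_zero[of b]] by simp
    finally have nw: "norm w \<le> norm v * (1 + norm b / d)" by (simp add: field_simps)
    have "(\<Sum>e\<in>B. \<bar>t e\<bar>) \<le> K * norm w" unfolding w_def by (rule K)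
    also have "\<dots> \<le> K * (norm v * (1 + norm b / d))" using nw K0 by (simp add: mult_left_mono)
    finally have sB: "(\<Sum>e\<in>B. \<bar>t e\<bar>) \<le> K * (1 + norm b / d) * norm v" by (simp add: field_simps)
    have "(\<Sum>e\<in>insert b B. \<bar>t e\<bar>) \<le> norm v / d + K * (1 + norm b / d) * norm v"
      using s_eq tb sB by linarith
    also have "\<dots> = K' * norm v" by (simp add: K'_def field_simps)
    finally show "(\<Sum>e\<in>insert b B. \<bar>t e\<bar>) \<le> K' * norm (\<Sum>e\<in>insert b B. t e *\<^sub>R e)"
      by (simp add: v_eq)
  qed
qed



locale fdim =
  fixes B :: "'e::banach set" and K :: real
  assumes finB: "finite B" and spanB: "span B = UNIV" and K0: "K > 0"
    and Kb: "\<And>t. (\<Sum>b\<in>B. \<bar>t b\<bar>) \<le> K * norm (\<Sum>b\<in>B. t b *\<^sub>R b)"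
begin

definition coord :: "'e \<Rightarrow> 'e \<Rightarrow> real" where
  "coord v = (SOME t. v = (\<Sum>b\<in>B. t b *\<^sub>R b))"

lemma coord_repr: "v = (\<Sum>b\<in>B. coord v b *\<^sub>R b)"
proof -
  have "\<exists>t. v = (\<Sum>b\<in>B. t b *\<^sub>R b)" using span_finite[OF finB] spanB by blast
  then show ?thesis unfolding coord_def by (rule someI_ex)
qed

lemma coord_unique:
  assumes "v = (\<Sum>b\<in>B. t b *\<^sub>R b)" "b \<in> B"
  shows "coord v b = t b"
proof -
  have "(\<Sum>b\<in>B. (coord v b - t b) *\<^sub>R b) = 0"
    using coord_repr[of v] assms(1) by (simp add: scaleR_diff_left sum_subtractf)
  then have "(\<Sum>b\<in>B. \<bar>coord v b - t b\<bar>) \<le> 0" using Kb[of "\<lambda>b. coord v b - t b"] by simp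
  then have "\<bar>coord v b - t b\<bar> \<le> 0"
    using member_le_sum[of b B "\<lambda>b. \<bar>coord v b - t b\<bar>"] assms(2) finB by simp
  then show ?thesis by simp
qed

lemma coord_add: "b \<in> B \<Longrightarrow> coord (u + v) b = coord u b + coord v b"
proof (rule coord_unique)
  have "u + v = (\<Sum>b\<in>B. coord u b *\<^sub>R b) + (\<Sum>b\<in>B. coord v b *\<^sub>R b)"
    using coord_repr[of u] coord_repr[of v] by simp
  also have "\<dots> = (\<Sum>b\<in>B. (coord u b + coord v b) *\<^sub>R b)"
    by (simp add: scaleR_add_left sum.distrib)
  finally show "u + v = (\<Sum>b\<in>B. (coord u b + coord v b) *\<^sub>R b)" .
qed

lemma coord_minus: "b \<in> B \<Longrightarrow> coord (- v) b = - coord v b"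
proof (rule coord_unique)
  show "- v = (\<Sum>b\<in>B. - coord v b *\<^sub>R b)"
  proof -
    have "- v = - (\<Sum>b\<in>B. coord v b *\<^sub>R b)" using coord_repr[of v] by simp
    also have "\<dots> = (\<Sum>b\<in>B. - coord v b *\<^sub>R b)" by (simp add: sum_negf)
    finally show ?thesis .
  qed
qed

lemma coord_diff: "b \<in> B \<Longrightarrow> coord (u - v) b = coord u b - coord v b"
  using coord_add[of b u "- v"] coord_minus[of b v] by simp

lemma coord_bound: "(\<Sum>b\<in>B. \<bar>coord v b\<bar>) \<le> K * norm v"
  using Kb[of "coord v"] coord_repr[of v] by simp

definition SB :: real where "SB = (\<Sum>b\<in>B. norm b) + 1"

lemma SB_pos: "SB > 0" unfolding SB_def by (simp add: add_nonneg_pos sum_nonneg)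

definition N2 :: "'e \<Rightarrow> real" where "N2 v = L2_set (coord v) B"

lemma N2_nonneg: "N2 v \<ge> 0" by (simp add: N2_def)

lemma abs_coord_le_N2: "b \<in> B \<Longrightarrow> \<bar>coord v b\<bar> \<le> N2 v"
proof -
  assume b: "b \<in> B"
  have "\<bar>coord v b\<bar> \<le> L2_set (\<lambda>b. \<bar>coord v b\<bar>) B" by (rule member_le_L2_set[OF finB b])
  also have "L2_set (\<lambda>b. \<bar>coord v b\<bar>) B = N2 v" by (simp add: N2_def L2_set_def)
  finally show ?thesis .
qed

lemma N2_le: "N2 v \<le> K * norm v"
  using L2_set_le_sum_abs[of "coord v" B] coord_bound[of v] by (simp add: N2_def)

lemma norm_le_N2: "norm v \<le> SB * N2 v"
proof -
  have "norm v = norm (\<Sum>b\<in>B. coord v b *\<^sub>R b)" using coord_repr[of v] by simp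
  also have "\<dots> \<le> (\<Sum>b\<in>B. norm (coord v b *\<^sub>R b))" by (rule norm_sum)
  also have "\<dots> = (\<Sum>b\<in>B. \<bar>coord v b\<bar> * norm b)" by simp
  also have "\<dots> \<le> (\<Sum>b\<in>B. N2 v * norm b)"
    by (intro sum_mono mult_right_mono abs_coord_le_N2) auto
  also have "\<dots> = N2 v * (\<Sum>b\<in>B. norm b)" by (simp add: sum_distrib_left)
  also have "\<dots> \<le> N2 v * SB" unfolding SB_def using N2_nonneg by (simp add: mult_left_mono)
  finally show ?thesis by (simp add: mult.commute)
qed

lemma N2_triangle: "N2 (u + v) \<le> N2 u + N2 v"
proof -
  have "N2 (u + v) = L2_set (\<lambda>b. coord u b + coord v b) B"
    unfolding N2_def by (rule L2_set_cong) (auto simp: coord_add)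
  also have "\<dots> \<le> N2 u + N2 v" unfolding N2_def by (rule L2_set_triangle_ineq)
  finally show ?thesis .
qed

lemma N2_sq: "(N2 v)\<^sup>2 = (\<Sum>b\<in>B. (coord v b)\<^sup>2)"
  unfolding N2_def L2_set_def by (simp add: sum_nonneg)

lemma N2_parallelogram: "(N2 (u + v))\<^sup>2 + (N2 (u - v))\<^sup>2 = 2 * (N2 u)\<^sup>2 + 2 * (N2 v)\<^sup>2"
proof -
  have "(N2 (u + v))\<^sup>2 + (N2 (u - v))\<^sup>2 = (\<Sum>b\<in>B. (coord u b + coord v b)\<^sup>2 + (coord u b - coord v b)\<^sup>2)"
    by (simp add: N2_sq sum.distrib coord_add coord_diff)
  also have "\<dots> = (\<Sum>b\<in>B. 2 * (coord u b)\<^sup>2 + 2 * (coord v b)\<^sup>2)"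
    by (intro sum.cong refl) (simp add: power2_eq_square algebra_simps)
  also have "\<dots> = 2 * (N2 u)\<^sup>2 + 2 * (N2 v)\<^sup>2" by (simp add: N2_sq sum.distrib sum_distrib_left)
  finally show ?thesis .
qed

lemma pigeonhole_close:
  fixes x :: "nat \<Rightarrow> 'e"
  assumes R: "\<And>n. norm (x n) \<le> R" and e: "e > 0"
  shows "\<exists>i j. i < j \<and> norm (x i - x j) < e"
proof -
  define \<delta> where "\<delta> = e / SB"
  have d0: "\<delta> > 0" using e SB_pos by (simp add: \<delta>_def)
  define M :: int where "M = \<lceil>K * R / \<delta>\<rceil> + 1"
  define cell where "cell n = (\<lambda>b. if b \<in> B then \<lfloor>coord (x n) b / \<delta>\<rfloor> else undefined)" for n
  define Cells where "Cells = PiE B (\<lambda>_. {-M..M})"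
  have finC: "finite Cells" unfolding Cells_def using finB by (simp add: finite_PiE)
  have cellC: "cell n \<in> Cells" for n
  proof -
    have "\<lfloor>coord (x n) b / \<delta>\<rfloor> \<in> {-M..M}" if b: "b \<in> B" for b
    proof -
      have "\<bar>coord (x n) b\<bar> \<le> K * norm (x n)"
        using member_le_sum[of b B "\<lambda>b. \<bar>coord (x n) b\<bar>"] b finB coord_bound[of "x n"] by simp
      also have "\<dots> \<le> K * R" using R[of n] K0 by (simp add: mult_left_mono)
      finally have c: "\<bar>coord (x n) b\<bar> \<le> K * R" .
      define q where "q = coord (x n) b / \<delta>"
      have "\<bar>q\<bar> \<le> K * R / \<delta>" unfolding q_def using c d0
        by (simp add: abs_divide divide_right_mono)
      then have q1: "q \<le> K * R / \<delta>" and q2: "- (K * R / \<delta>) \<le> q" by (simp_all add: abs_le_iff)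
      have q3: "K * R / \<delta> \<le> of_int (\<lceil>K * R / \<delta>\<rceil>)" by (rule le_of_int_ceiling)
      have "q \<le> of_int (\<lceil>K * R / \<delta>\<rceil>)" "- of_int (\<lceil>K * R / \<delta>\<rceil>) \<le> q"
        using q1 q2 q3 by linarith+
      then have "coord (x n) b / \<delta> \<le> of_int (\<lceil>K * R / \<delta>\<rceil>)" "- of_int (\<lceil>K * R / \<delta>\<rceil>) \<le> coord (x n) b / \<delta>"
        by (simp_all add: q_def)
      then show ?thesis unfolding M_def by (simp add: floor_le_iff le_floor_iff)
    qed
    then show ?thesis unfolding Cells_def cell_def by (auto simp: PiE_def extensional_def)
  qed
  have "\<not> inj_on cell {..card Cells}"
  proof
    assume "inj_on cell {..card Cells}"
    then have "card {..card Cells} \<le> card Cells" using card_inj_on_le[of cell _ Cells] cellC finC by blast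
    then show False by simp
  qed
  then obtain i j where ij: "i \<noteq> j" "cell i = cell j" unfolding inj_on_def by blast
  have close: "norm (x i - x j) < e" if c: "cell i = cell j" for i j
  proof -
    have fl: "\<lfloor>coord (x i) b / \<delta>\<rfloor> = \<lfloor>coord (x j) b / \<delta>\<rfloor>" if b: "b \<in> B" for b
      using fun_cong[OF c, of b] b unfolding cell_def by simp
    have cb: "\<bar>coord (x i) b - coord (x j) b\<bar> \<le> \<delta>" if b: "b \<in> B" for b
    proof -
      define qi where "qi = coord (x i) b / \<delta>"
      define qj where "qj = coord (x j) b / \<delta>"
      have f: "\<lfloor>qi\<rfloor> = \<lfloor>qj\<rfloor>" using fl[OF b] by (simp only: qi_def qj_def)
      have h: "of_int \<lfloor>qi\<rfloor> \<le> qi" "qi < of_int \<lfloor>qi\<rfloor> + 1" "of_int \<lfloor>qj\<rfloor> \<le> qj" "qj < of_int \<lfloor>qj\<rfloor> + 1"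
        by (rule of_int_floor_le real_of_int_floor_add_one_gt)+
      have "real_of_int \<lfloor>qi\<rfloor> = real_of_int \<lfloor>qj\<rfloor>" using f by simp
      then have "qi - qj \<le> 1" "qj - qi \<le> 1" using h by linarith+
      then have a1: "\<bar>qi - qj\<bar> \<le> 1" by (simp add: abs_le_iff)
      have eq: "coord (x i) b - coord (x j) b = \<delta> * (qi - qj)"
        using d0 by (simp add: qi_def qj_def right_diff_distrib)
      have "\<bar>coord (x i) b - coord (x j) b\<bar> = \<delta> * \<bar>qi - qj\<bar>"
        unfolding eq using d0 by (simp add: abs_mult)
      also have "\<dots> \<le> \<delta> * 1" using a1 d0 by (intro mult_left_mono) auto
      finally show ?thesis by simp
    qed
    have e1: "(\<Sum>b\<in>B. coord (x i) b *\<^sub>R b) - (\<Sum>b\<in>B. coord (x j) b *\<^sub>R b) = (\<Sum>b\<in>B. (coord (x i) b - coord (x j) b) *\<^sub>R b)"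
      by (simp add: scaleR_diff_left sum_subtractf)
    have "x i - x j = (\<Sum>b\<in>B. (coord (x i) b - coord (x j) b) *\<^sub>R b)"
      using e1 coord_repr[of "x i", symmetric] coord_repr[of "x j", symmetric] by simp
    then have "norm (x i - x j) \<le> (\<Sum>b\<in>B. norm ((coord (x i) b - coord (x j) b) *\<^sub>R b))"
      by (metis norm_sum)
    also have "\<dots> \<le> (\<Sum>b\<in>B. \<delta> * norm b)"
      by (intro sum_mono) (simp only: norm_scaleR, rule mult_right_mono[OF cb], auto)
    also have "\<dots> = \<delta> * (SB - 1)" by (simp add: SB_def sum_distrib_left)
    also have "\<dots> < \<delta> * SB" using d0 by simp
    also have "\<dots> = e" using SB_pos by (simp add: \<delta>_def)
    finally show ?thesis .
  qed
  show ?thesis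
  proof (cases "i < j")
    case True then show ?thesis using close ij by blast
  next
    case False
    then have "j < i" using ij by simp
    moreover have "norm (x j - x i) < e" using close ij by simp
    ultimately show ?thesis by blast
  qed
qed

end



lemma cauchy_from_sq_bound:
  fixes x :: "nat \<Rightarrow> 'a::real_normed_vector"
  assumes "\<And>m n. (norm (x m - x n))\<^sup>2 \<le> c / Suc m + c / Suc n"
  shows "Cauchy x"
proof (rule CauchyI)
  fix e :: real assume e: "0 < e"
  have c0: "c \<ge> 0" using assms[of 0 0] by (simp add: order_trans[OF zero_le_power2])
  have "e\<^sup>2 / (2 * (c + 1)) > 0" using e c0 by simp
  then obtain N where N: "1 / Suc N < e\<^sup>2 / (2 * (c + 1))" by (rule nat_approx_posE)
  show "\<exists>M. \<forall>m\<ge>M. \<forall>n\<ge>M. norm (x m - x n) < e"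
  proof (intro exI allI impI)
    fix m n assume mn: "N \<le> m" "N \<le> n"
    have a: "c / Suc m \<le> c / Suc N" using mn c0 by (simp add: frac_le)
    have b: "c / Suc n \<le> c / Suc N" using mn c0 by (simp add: frac_le)
    have "c / Suc N = c * (1 / Suc N)" by simp
    also have "\<dots> \<le> c * (e\<^sup>2 / (2 * (c + 1)))" using N c0 by (intro mult_left_mono) auto
    also have "\<dots> < e\<^sup>2 / 2" using e c0 by (simp add: field_simps)
    finally have "c / Suc N < e\<^sup>2 / 2" .
    then have "(norm (x m - x n))\<^sup>2 < e\<^sup>2" using assms[of m n] a b by linarith
    then show "norm (x m - x n) < e" using e by (simp add: power_less_imp_less_base)
  qed
qed

locale fdim_mod = fdim B K
  for B :: "'e::banach set" and K +
  fixes G :: "('g, 'b) monoid_scheme" and \<rho> :: "'g \<Rightarrow> 'e \<Rightarrow> 'e"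
  assumes grp: "group G"
    and lin: "\<And>g. g \<in> carrier G \<Longrightarrow> linear (\<rho> g)"
    and iso: "\<And>g v. g \<in> carrier G \<Longrightarrow> norm (\<rho> g v) = norm v"
    and rho_one: "\<rho> \<one>\<^bsub>G\<^esub> = id"
    and rho_mult: "\<And>g h. g \<in> carrier G \<Longrightarrow> h \<in> carrier G \<Longrightarrow> \<rho> (g \<otimes>\<^bsub>G\<^esub> h) = \<rho> g \<circ> \<rho> h"
begin

definition N :: "'e \<Rightarrow> real" where
  "N v = Sup ((\<lambda>g. N2 (\<rho> g v)) ` carrier G)"

lemma carrier_ne: "carrier G \<noteq> {}"
  using group.is_monoid[OF grp] monoid.one_closed by blast

lemma one_in: "\<one>\<^bsub>G\<^esub> \<in> carrier G"
  using group.is_monoid[OF grp] monoid.one_closed by blast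

lemma N_bdd: "bdd_above ((\<lambda>g. N2 (\<rho> g v)) ` carrier G)"
proof (rule bdd_aboveI2)
  fix g assume "g \<in> carrier G"
  then show "N2 (\<rho> g v) \<le> K * norm v" using N2_le[of "\<rho> g v"] iso by simp
qed

lemma N2_le_N: "g \<in> carrier G \<Longrightarrow> N2 (\<rho> g v) \<le> N v"
  unfolding N_def by (rule cSUP_upper[OF _ N_bdd])

lemma N_le: "N v \<le> K * norm v"
  unfolding N_def
proof (rule cSUP_least[OF carrier_ne])
  fix g assume "g \<in> carrier G"
  then show "N2 (\<rho> g v) \<le> K * norm v" using N2_le[of "\<rho> g v"] iso[of g v] by simp
qed

lemma N_nonneg: "N v \<ge> 0"
  using N2_le_N[OF one_in, of v] N2_nonneg[of "\<rho> \<one>\<^bsub>G\<^esub> v"] by linarith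

lemma norm_le_N: "norm v \<le> SB * N v"
proof -
  have "norm v \<le> SB * N2 v" by (rule norm_le_N2)
  also have "N2 v \<le> N v" using N2_le_N[OF one_in, of v] by (simp add: rho_one)
  then have "SB * N2 v \<le> SB * N v" using SB_pos by simp
  finally show ?thesis .
qed

lemma N_triangle: "N (u + v) \<le> N u + N v"
  unfolding N_def[of "u + v"]
proof (rule cSUP_least[OF carrier_ne])
  fix g assume g: "g \<in> carrier G"
  have "N2 (\<rho> g (u + v)) = N2 (\<rho> g u + \<rho> g v)" using lin[OF g] by (simp add: linear_add)
  also have "\<dots> \<le> N2 (\<rho> g u) + N2 (\<rho> g v)" by (rule N2_triangle)
  also have "\<dots> \<le> N u + N v" using N2_le_N[OF g] by (simp add: add_mono)
  finally show "N2 (\<rho> g (u + v)) \<le> N u + N v" .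
qed

lemma N_rho: assumes h: "h \<in> carrier G" shows "N (\<rho> h v) = N v"
proof -
  have img: "(\<lambda>g. g \<otimes>\<^bsub>G\<^esub> h) ` carrier G = carrier G"
  proof
    show "(\<lambda>g. g \<otimes>\<^bsub>G\<^esub> h) ` carrier G \<subseteq> carrier G"
      using h group.is_monoid[OF grp] monoid.m_closed by fastforce
    show "carrier G \<subseteq> (\<lambda>g. g \<otimes>\<^bsub>G\<^esub> h) ` carrier G"
    proof
      fix x assume x: "x \<in> carrier G"
      interpret G: group G by (rule grp)
      have "x = (x \<otimes>\<^bsub>G\<^esub> inv\<^bsub>G\<^esub> h) \<otimes>\<^bsub>G\<^esub> h"
        using x h by (simp add: G.m_assoc)
      moreover have "x \<otimes>\<^bsub>G\<^esub> inv\<^bsub>G\<^esub> h \<in> carrier G" using x h grp by simp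
      ultimately show "x \<in> (\<lambda>g. g \<otimes>\<^bsub>G\<^esub> h) ` carrier G" by blast
    qed
  qed
  have "(\<lambda>g. N2 (\<rho> g (\<rho> h v))) ` carrier G = (\<lambda>g. N2 (\<rho> (g \<otimes>\<^bsub>G\<^esub> h) v)) ` carrier G"
    using h by (intro image_cong refl) (simp add: rho_mult)
  also have "\<dots> = (\<lambda>g. N2 (\<rho> g v)) ` ((\<lambda>g. g \<otimes>\<^bsub>G\<^esub> h) ` carrier G)" by (simp add: image_image)
  also have "\<dots> = (\<lambda>g. N2 (\<rho> g v)) ` carrier G" using img by simp
  finally show ?thesis unfolding N_def by simp
qed

lemma N_minus: "N (- v) = N v"
proof -
  have "(\<lambda>g. N2 (\<rho> g (- v))) ` carrier G = (\<lambda>g. N2 (- \<rho> g v)) ` carrier G"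
    by (intro image_cong refl) (simp add: linear_neg lin)
  moreover have "N2 (- w) = N2 w" for w
  proof -
    have "N2 (- w) = L2_set (\<lambda>b. - coord w b) B"
      unfolding N2_def by (rule L2_set_cong) (auto simp: coord_minus)
    then show ?thesis by (simp add: N2_def L2_set_def)
  qed
  ultimately show ?thesis unfolding N_def by simp
qed

lemma N_diff_commute: "N (u - v) = N (v - u)"
  using N_minus[of "u - v"] by simp

lemma N_parallelogram:
  "2 * (N u)\<^sup>2 + 2 * (norm v / SB)\<^sup>2 \<le> (N (u + v))\<^sup>2 + (N (u - v))\<^sup>2"
proof -
  define M where "M = ((N (u + v))\<^sup>2 + (N (u - v))\<^sup>2 - 2 * (norm v / SB)\<^sup>2) / 2"
  have key: "(N2 (\<rho> g u))\<^sup>2 \<le> M" if g: "g \<in> carrier G" for g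
  proof -
    have p: "(N2 (\<rho> g u + \<rho> g v))\<^sup>2 + (N2 (\<rho> g u - \<rho> g v))\<^sup>2 = 2 * (N2 (\<rho> g u))\<^sup>2 + 2 * (N2 (\<rho> g v))\<^sup>2"
      by (rule N2_parallelogram)
    have "\<rho> g u + \<rho> g v = \<rho> g (u + v)" "\<rho> g u - \<rho> g v = \<rho> g (u - v)"
      using lin[OF g] by (simp_all add: linear_add linear_diff)
    then have p2: "(N2 (\<rho> g (u + v)))\<^sup>2 + (N2 (\<rho> g (u - v)))\<^sup>2 = 2 * (N2 (\<rho> g u))\<^sup>2 + 2 * (N2 (\<rho> g v))\<^sup>2"
      using p by simp
    have a: "(N2 (\<rho> g (u + v)))\<^sup>2 \<le> (N (u + v))\<^sup>2"
      using N2_le_N[OF g] N2_nonneg by (simp add: power_mono)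
    have b: "(N2 (\<rho> g (u - v)))\<^sup>2 \<le> (N (u - v))\<^sup>2"
      using N2_le_N[OF g] N2_nonneg by (simp add: power_mono)
    have "norm v / SB \<le> N2 (\<rho> g v)"
      using norm_le_N2[of "\<rho> g v"] iso[OF g, of v] SB_pos by (simp add: divide_le_eq mult.commute)
    then have c: "(norm v / SB)\<^sup>2 \<le> (N2 (\<rho> g v))\<^sup>2"
      using SB_pos by (intro power_mono) auto
    show ?thesis unfolding M_def using p2 a b c by (simp add: field_simps)
  qed
  have M0: "M \<ge> 0" using key[OF one_in] by (meson order_trans zero_le_power2)
  have "N u \<le> sqrt M" unfolding N_def
  proof (rule cSUP_least[OF carrier_ne])
    fix g assume "g \<in> carrier G"
    then have "(N2 (\<rho> g u))\<^sup>2 \<le> M" by (rule key)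
    then show "N2 (\<rho> g u) \<le> sqrt M" using N2_nonneg by (simp add: real_le_rsqrt)
  qed
  then have "(N u)\<^sup>2 \<le> M" using N_nonneg M0 by (metis power_mono real_sqrt_pow2)
  then show ?thesis unfolding M_def by (simp add: field_simps)
qed

end



context fdim_mod begin

lemma fixed_point:
  fixes Om :: "'e set" and J :: "'j set" and w :: "'j \<Rightarrow> 'e" and gj :: "'j \<Rightarrow> 'g"
  assumes ne: "Om \<noteq> {}" and bd: "\<And>v. v \<in> Om \<Longrightarrow> norm v \<le> R"
    and gj: "\<And>j. j \<in> J \<Longrightarrow> gj j \<in> carrier G"
    and inv: "\<And>j v. j \<in> J \<Longrightarrow> v \<in> Om \<Longrightarrow> w j + \<rho> (gj j) v \<in> Om"
  shows "\<exists>p. \<forall>j\<in>J. w j + \<rho> (gj j) p = p"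
proof -
  define rr where "rr c = Sup ((\<lambda>y. (N (c - y))\<^sup>2) ` Om)" for c
  have rr_bdd: "bdd_above ((\<lambda>y. (N (c - y))\<^sup>2) ` Om)" for c
  proof (rule bdd_aboveI2)
    fix y assume y: "y \<in> Om"
    have "N (c - y) \<le> K * norm (c - y)" by (rule N_le)
    also have "\<dots> \<le> K * (norm c + R)"
      using K0 bd[OF y] norm_triangle_ineq4[of c y] by (intro mult_left_mono) auto
    finally show "(N (c - y))\<^sup>2 \<le> (K * (norm c + R))\<^sup>2"
      using N_nonneg by (intro power_mono) auto
  qed
  have rr_upper: "(N (c - y))\<^sup>2 \<le> rr c" if "y \<in> Om" for c y
    unfolding rr_def by (rule cSUP_upper[OF that rr_bdd])
  have rr_least: "rr c \<le> M" if "\<And>y. y \<in> Om \<Longrightarrow> (N (c - y))\<^sup>2 \<le> M" for c M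
    unfolding rr_def by (rule cSUP_least[OF ne that])
  have rr_nonneg: "rr c \<ge> 0" for c
  proof -
    obtain y where "y \<in> Om" using ne by blast
    then show ?thesis using rr_upper[of y c] by (meson order_trans zero_le_power2)
  qed
  define m0 where "m0 = Inf (range rr)"
  have bddb: "bdd_below (range rr)" using rr_nonneg by (intro bdd_belowI2) 
  have m0_le: "m0 \<le> rr c" for c unfolding m0_def by (rule cINF_lower[OF bddb]) simp
  have mid: "2 * rr ((1/2) *\<^sub>R (c1 + c2)) + 2 * (norm ((1/2) *\<^sub>R (c1 - c2)) / SB)\<^sup>2 \<le> rr c1 + rr c2" for c1 c2
  proof -
    define d where "d = (1/2) *\<^sub>R (c1 - c2)"
    define M where "M = (rr c1 + rr c2 - 2 * (norm d / SB)\<^sup>2) / 2"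
    have "rr ((1/2) *\<^sub>R (c1 + c2)) \<le> M"
    proof (rule rr_least)
      fix y assume y: "y \<in> Om"
      define u where "u = (1/2) *\<^sub>R (c1 + c2) - y"
      have e1: "u + d = c1 - y" unfolding u_def d_def by (simp add: algebra_simps scaleR_2[symmetric])
      have e2: "u - d = c2 - y" unfolding u_def d_def by (simp add: algebra_simps scaleR_2[symmetric])
      have "2 * (N u)\<^sup>2 + 2 * (norm d / SB)\<^sup>2 \<le> (N (u + d))\<^sup>2 + (N (u - d))\<^sup>2" by (rule N_parallelogram)
      also have "\<dots> \<le> rr c1 + rr c2" unfolding e1 e2 using rr_upper[OF y] by (simp add: add_mono)
      finally show "(N ((1/2) *\<^sub>R (c1 + c2) - y))\<^sup>2 \<le> M" unfolding M_def u_def by (simp add: field_simps)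
    qed
    then show ?thesis unfolding M_def d_def by (simp add: field_simps)
  qed
  have gap: "(norm (c1 - c2))\<^sup>2 \<le> 2 * SB\<^sup>2 * (rr c1 + rr c2 - 2 * m0)" for c1 c2
  proof -
    have n: "norm ((1/2) *\<^sub>R (c1 - c2)) = norm (c1 - c2) / 2" by simp
    have m: "2 * rr ((1/2) *\<^sub>R (c1 + c2)) + 2 * (norm (c1 - c2) / 2 / SB)\<^sup>2 \<le> rr c1 + rr c2"
      using mid[of c1 c2] unfolding n .
    have A: "2 * m0 + 2 * (norm (c1 - c2) / 2 / SB)\<^sup>2 \<le> rr c1 + rr c2"
      using m m0_le[of "(1/2) *\<^sub>R (c1 + c2)"] by linarith
    have sq: "(norm (c1 - c2) / 2 / SB)\<^sup>2 = (norm (c1 - c2))\<^sup>2 / (4 * SB\<^sup>2)"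
      by (simp add: power_divide power_mult_distrib)
    have "(norm (c1 - c2))\<^sup>2 / (2 * SB\<^sup>2) \<le> rr c1 + rr c2 - 2 * m0"
      using A unfolding sq by simp
    then show ?thesis using SB_pos by (simp add: field_simps)
  qed
  have "\<forall>n::nat. \<exists>c. rr c < m0 + 1 / Suc n"
  proof
    fix n :: nat
    have "Inf (range rr) < m0 + 1 / Suc n" unfolding m0_def by simp
    then show "\<exists>c. rr c < m0 + 1 / Suc n" using cInf_lessD[of "range rr"] by blast
  qed
  then obtain cs where cs: "\<And>n. rr (cs n) < m0 + 1 / Suc n" by metis
  have "Cauchy cs"
  proof (rule cauchy_from_sq_bound[where c = "2 * SB\<^sup>2"])
    fix m n
    have "(norm (cs m - cs n))\<^sup>2 \<le> 2 * SB\<^sup>2 * (rr (cs m) + rr (cs n) - 2 * m0)" by (rule gap)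
    also have "\<dots> \<le> 2 * SB\<^sup>2 * (1 / Suc m + 1 / Suc n)"
      using cs[of m] cs[of n] by (intro mult_left_mono) auto
    finally show "(norm (cs m - cs n))\<^sup>2 \<le> 2 * SB\<^sup>2 / Suc m + 2 * SB\<^sup>2 / Suc n"
      by (simp add: field_simps)
  qed
  then obtain cstar where lim: "cs \<longlonglongrightarrow> cstar" by (metis Cauchy_convergent_iff convergent_def)
  have lim_rr: "(\<lambda>n. rr (cs n)) \<longlonglongrightarrow> m0"
  proof (rule tendsto_sandwich[where f="\<lambda>n. m0" and h="\<lambda>n. m0 + 1 / Suc n"])
    show "\<forall>\<^sub>F n in sequentially. m0 \<le> rr (cs n)" by (simp add: m0_le)
    show "\<forall>\<^sub>F n in sequentially. rr (cs n) \<le> m0 + 1 / Suc n" using cs by (simp add: less_imp_le)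
    show "(\<lambda>n. m0) \<longlonglongrightarrow> m0" by simp
    have "(\<lambda>n. 1 / real (Suc n)) \<longlonglongrightarrow> 0" using LIMSEQ_inverse_real_of_nat by (simp add: inverse_eq_divide)
    then show "(\<lambda>n. m0 + 1 / real (Suc n)) \<longlonglongrightarrow> m0" using tendsto_add[of "\<lambda>n. m0" m0] by fastforce
  qed
  have m0_nn: "m0 \<ge> 0"
    using lim_rr rr_nonneg by (intro LIMSEQ_le_const[OF lim_rr]) auto
  have rr_star: "rr cstar \<le> m0"
  proof (rule rr_least)
    fix y assume y: "y \<in> Om"
    have bnd: "N (cstar - y) \<le> sqrt (rr (cs n)) + K * norm (cstar - cs n)" for n
    proof -
      have "cstar - y = (cs n - y) + (cstar - cs n)" by simp
      then have "N (cstar - y) \<le> N (cs n - y) + N (cstar - cs n)" by (metis N_triangle)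
      moreover have "N (cs n - y) \<le> sqrt (rr (cs n))"
        using rr_upper[OF y, of "cs n"] N_nonneg by (simp add: real_le_rsqrt)
      moreover have "N (cstar - cs n) \<le> K * norm (cstar - cs n)" by (rule N_le)
      ultimately show ?thesis by linarith
    qed
    have "(\<lambda>n. sqrt (rr (cs n)) + K * norm (cstar - cs n)) \<longlonglongrightarrow> sqrt m0 + K * norm (cstar - cstar)"
      by (intro tendsto_intros lim_rr lim)
    then have "N (cstar - y) \<le> sqrt m0 + K * norm (cstar - cstar)"
      using bnd by (intro LIMSEQ_le_const) auto
    then have "N (cstar - y) \<le> sqrt m0" by simp
    then show "(N (cstar - y))\<^sup>2 \<le> m0" using N_nonneg m0_nn
      by (metis power_mono real_sqrt_pow2)
  qed
  have uniq: "c = cstar" if "rr c \<le> m0" for c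
  proof -
    have "(norm (c - cstar))\<^sup>2 \<le> 2 * SB\<^sup>2 * (rr c + rr cstar - 2 * m0)" by (rule gap)
    also have "\<dots> \<le> 0" using that rr_star SB_pos by (intro mult_nonneg_nonpos) auto
    finally show ?thesis by simp
  qed
  show ?thesis
  proof (intro exI ballI)
    fix j assume j: "j \<in> J"
    define \<beta> where "\<beta> v = w j + \<rho> (gj j) v" for v
    have g: "gj j \<in> carrier G" by (rule gj[OF j])
    have \<beta>_diff: "\<beta> a - \<beta> b = \<rho> (gj j) (a - b)" for a b
      unfolding \<beta>_def using lin[OF g] by (simp add: linear_diff)
    have \<beta>_iso: "norm ((\<beta> ^^ n) a - (\<beta> ^^ n) b) = norm (a - b)" for n a b
    proof (induction n)
      case 0 then show ?case by simp
    next
      case (Suc n)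
      have "norm ((\<beta> ^^ Suc n) a - (\<beta> ^^ Suc n) b) = norm (\<beta> ((\<beta> ^^ n) a) - \<beta> ((\<beta> ^^ n) b))" by simp
      also have "\<dots> = norm ((\<beta> ^^ n) a - (\<beta> ^^ n) b)" unfolding \<beta>_diff by (rule iso[OF g])
      finally show ?case using Suc.IH by simp
    qed
    have \<beta>_Om: "(\<beta> ^^ n) y \<in> Om" if "y \<in> Om" for n y
      using that by (induction n) (simp_all add: \<beta>_def inv[OF j])
    have "rr (\<beta> cstar) \<le> rr cstar"
    proof (rule rr_least)
      fix y assume y: "y \<in> Om"
      have "N (\<beta> cstar - y) \<le> sqrt (rr cstar)"
      proof (rule field_le_epsilon)
        fix e :: real assume e: "e > 0"
        have "e / K > 0" using e K0 by simp
        moreover have "\<And>n. norm ((\<beta> ^^ n) y) \<le> R" using \<beta>_Om[OF y] bd by blast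
        ultimately obtain i k where ik: "i < k" "norm ((\<beta> ^^ i) y - (\<beta> ^^ k) y) < e / K"
          using pigeonhole_close[of "\<lambda>n. (\<beta> ^^ n) y" R "e / K"] by blast
        obtain d where d0: "k = Suc (i + d)" using less_imp_Suc_add[OF ik(1)] by blast
        then have d: "k = i + Suc d" by simp
        have "(\<beta> ^^ k) y = (\<beta> ^^ i) ((\<beta> ^^ (Suc d)) y)"
          unfolding d funpow_add by simp
        then have "norm (y - (\<beta> ^^ (Suc d)) y) = norm ((\<beta> ^^ i) y - (\<beta> ^^ k) y)"
          using \<beta>_iso[of i y "(\<beta> ^^ (Suc d)) y"] by simp
        then have c1: "norm (y - (\<beta> ^^ (Suc d)) y) < e / K" using ik(2) by simp
        define y' where "y' = (\<beta> ^^ d) y"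
        have y'Om: "y' \<in> Om" unfolding y'_def by (rule \<beta>_Om[OF y])
        have "\<beta> y' = (\<beta> ^^ (Suc d)) y" unfolding y'_def by simp
        then have c2: "norm (\<beta> y' - y) < e / K" using c1 by (simp add: norm_minus_commute)
        have "\<beta> cstar - y = (\<beta> cstar - \<beta> y') + (\<beta> y' - y)" by simp
        then have "N (\<beta> cstar - y) \<le> N (\<beta> cstar - \<beta> y') + N (\<beta> y' - y)" by (metis N_triangle)
        also have "N (\<beta> cstar - \<beta> y') = N (cstar - y')" by (simp add: \<beta>_diff N_rho[OF g])
        also have "N (cstar - y') \<le> sqrt (rr cstar)"
          using rr_upper[OF y'Om, of cstar] N_nonneg by (simp add: real_le_rsqrt)
        also have "N (\<beta> y' - y) \<le> K * norm (\<beta> y' - y)" by (rule N_le)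
        also have "K * norm (\<beta> y' - y) \<le> K * (e / K)" using c2 K0 by (intro mult_left_mono) auto
        also have "K * (e / K) = e" using K0 by simp
        finally show "N (\<beta> cstar - y) \<le> sqrt (rr cstar) + e" by simp
      qed
      then have "(N (\<beta> cstar - y))\<^sup>2 \<le> (sqrt (rr cstar))\<^sup>2" by (rule power_mono[OF _ N_nonneg])
      then show "(N (\<beta> cstar - y))\<^sup>2 \<le> rr cstar" using rr_nonneg[of cstar] by simp
    qed
    then have "\<beta> cstar = cstar" using rr_star by (intro uniq) (rule order_trans)
    then show "w j + \<rho> (gj j) cstar = cstar" by (simp add: \<beta>_def)
  qed
qed

end


locale splitting = group G for G :: "('g, 'b) monoid_scheme" (structure) +
  fixes A B :: "'g set"
  assumes fps: "free_product_splitting G A B"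
begin

lemma subA: "subgroup A G" and subB: "subgroup B G" and AB: "A \<inter> B = {\<one>}"
  and uniq: "\<And>g. g \<in> carrier G \<Longrightarrow> \<exists>!w. reduced_word G A B w \<and> word_prod G w = g"
  using fps unfolding free_product_splitting_def by auto

lemma A_carr: "x \<in> A \<Longrightarrow> x \<in> carrier G" using subA subgroup.subset by blast
lemma B_carr: "x \<in> B \<Longrightarrow> x \<in> carrier G" using subB subgroup.subset by blast

lemma word_prod_Nil [simp]: "word_prod G [] = \<one>" by (simp add: word_prod_def)
lemma word_prod_Cons [simp]: "word_prod G (x # w) = x \<otimes> word_prod G w" by (simp add: word_prod_def)

lemma word_prod_carr: "set w \<subseteq> carrier G \<Longrightarrow> word_prod G w \<in> carrier G"
  by (induction w) auto

lemma reduced_set: "reduced_word G A B w \<Longrightarrow> set w \<subseteq> carrier G"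
  unfolding reduced_word_def using A_carr B_carr by blast

lemma reduced_Nil: "reduced_word G A B []" by (simp add: reduced_word_def)

lemma reduced_Cons:
  assumes "reduced_word G A B w" "x \<in> (A - {\<one>}) \<union> (B - {\<one>})"
    "w \<noteq> [] \<Longrightarrow> \<not> (x \<in> A \<and> hd w \<in> A) \<and> \<not> (x \<in> B \<and> hd w \<in> B)"
  shows "reduced_word G A B (x # w)"
proof -
  have 1: "\<forall>y\<in>set (x # w). y \<in> A - {\<one>} \<union> (B - {\<one>})" using assms(1,2) by (auto simp: reduced_word_def)
  have 2: "\<not> ((x # w) ! i \<in> A \<and> (x # w) ! Suc i \<in> A) \<and> \<not> ((x # w) ! i \<in> B \<and> (x # w) ! Suc i \<in> B)"
    if i: "Suc i < length (x # w)" for i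
  proof (cases i)
    case 0
    then have "w \<noteq> []" using i by auto
    then show ?thesis using assms(3) 0 by (simp add: hd_conv_nth)
  next
    case (Suc j)
    then show ?thesis using assms(1) i unfolding reduced_word_def by auto
  qed
  show ?thesis unfolding reduced_word_def using 1 2 by blast
qed

lemma nf_eq: "reduced_word G A B w \<Longrightarrow> normal_form G A B (word_prod G w) = w"
  unfolding normal_form_def
  by (rule the1_equality[OF uniq]) (auto intro: word_prod_carr[OF reduced_set])

lemma one_A: "\<one> \<in> A" using subA subgroup.one_closed by blast
lemma one_B: "\<one> \<in> B" using subB subgroup.one_closed by blast

lemma notB_of_A: "x \<in> A \<Longrightarrow> x \<noteq> \<one> \<Longrightarrow> x \<notin> B" using AB by blast
lemma notA_of_B: "x \<in> B \<Longrightarrow> x \<noteq> \<one> \<Longrightarrow> x \<notin> A" using AB by blast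

definition bw :: "'g \<Rightarrow> 'g list \<Rightarrow> 'g list" where
  "bw b0 xs = concat (map (\<lambda>x. [x, b0]) xs)"

lemma bw_Nil [simp]: "bw b0 [] = []" and bw_Cons [simp]: "bw b0 (x # xs) = x # b0 # bw b0 xs"
  by (simp_all add: bw_def)

lemma bw_hd: "bw b0 xs \<noteq> [] \<Longrightarrow> hd (bw b0 xs) \<in> set xs"
  by (cases xs) auto

lemma bw_reduced:
  assumes b0: "b0 \<in> B" "b0 \<noteq> \<one>" and xs: "set xs \<subseteq> A - {\<one>}"
  shows "reduced_word G A B (bw b0 xs)"
  using xs
proof (induction xs)
  case Nil then show ?case by (simp add: reduced_Nil)
next
  case (Cons x xs)
  have r: "reduced_word G A B (bw b0 xs)" using Cons by simp
  have r2: "reduced_word G A B (b0 # bw b0 xs)"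
  proof (rule reduced_Cons[OF r])
    show "b0 \<in> A - {\<one>} \<union> (B - {\<one>})" using b0 by simp
    assume ne: "bw b0 xs \<noteq> []"
    then have "hd (bw b0 xs) \<in> A - {\<one>}" using bw_hd[OF ne] Cons.prems by auto
    then show "\<not> (b0 \<in> A \<and> hd (bw b0 xs) \<in> A) \<and> \<not> (b0 \<in> B \<and> hd (bw b0 xs) \<in> B)"
      using notA_of_B[OF b0] notB_of_A by auto
  qed
  have x: "x \<in> A" "x \<noteq> \<one>" using Cons.prems by auto
  show ?case unfolding bw_Cons
    by (rule reduced_Cons[OF r2]) (use x notA_of_B[OF b0] notB_of_A[OF x] in auto)
qed

lemma bw_carr: "b0 \<in> B \<Longrightarrow> set xs \<subseteq> A \<Longrightarrow> word_prod G (bw b0 xs) \<in> carrier G"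
  by (induction xs) (auto simp: A_carr B_carr)

lemma split_word_bw:
  fixes \<rho> :: "'g \<Rightarrow> 'e::banach \<Rightarrow> 'e"
  assumes b0: "b0 \<in> B" "b0 \<noteq> \<one>" and x: "x \<in> A" "x \<noteq> \<one>" and xs: "set xs \<subseteq> A - {\<one>}"
    and lin: "\<And>g. g \<in> carrier G \<Longrightarrow> linear (\<rho> g)"
    and mult: "\<And>g h. g \<in> carrier G \<Longrightarrow> h \<in> carrier G \<Longrightarrow> \<rho> (g \<otimes> h) = \<rho> g \<circ> \<rho> h"
  shows "split_quasicocycle G A B \<rho> fA (\<lambda>_. 0) (word_prod G (bw b0 (x # xs)))
       = fA x + \<rho> (x \<otimes> b0) (split_quasicocycle G A B \<rho> fA (\<lambda>_. 0) (word_prod G (bw b0 xs)))"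
proof -
  have xs': "set (x # xs) \<subseteq> A - {\<one>}" using x xs by auto
  have b0A: "b0 \<notin> A" using notA_of_B[OF b0] .
  have "split_quasicocycle G A B \<rho> fA (\<lambda>_. 0) (word_prod G (bw b0 (x # xs)))
      = split_word A \<rho> fA (\<lambda>_. 0) (x # b0 # bw b0 xs)"
    unfolding split_quasicocycle_def nf_eq[OF bw_reduced[OF b0 xs']] by simp
  also have "\<dots> = fA x + \<rho> x (\<rho> b0 (split_word A \<rho> fA (\<lambda>_. 0) (bw b0 xs)))"
    using x b0A by simp
  also have "\<dots> = fA x + \<rho> (x \<otimes> b0) (split_word A \<rho> fA (\<lambda>_. 0) (bw b0 xs))"
    using mult[OF A_carr[OF x(1)] B_carr[OF b0(1)]] by simp
  also have "split_word A \<rho> fA (\<lambda>_. 0) (bw b0 xs) = split_quasicocycle G A B \<rho> fA (\<lambda>_. 0) (word_prod G (bw b0 xs))"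
    unfolding split_quasicocycle_def nf_eq[OF bw_reduced[OF b0 xs]] ..
  finally show ?thesis .
qed

lemma bw_prod: "b0 \<in> B \<Longrightarrow> x \<in> A \<Longrightarrow> set xs \<subseteq> A \<Longrightarrow>
  word_prod G (bw b0 (x # xs)) = (x \<otimes> b0) \<otimes> word_prod G (bw b0 xs)"
  by (simp add: m_assoc A_carr B_carr bw_carr)

end



context splitting begin

lemma main_result:
  fixes \<rho> :: "'g \<Rightarrow> 'e::banach \<Rightarrow> 'e" and a b0 :: 'g and v0 :: 'e
  assumes a: "a \<in> A" and ainf: "infinite_order G a"
    and b0: "b0 \<in> B" "b0 \<noteq> \<one>" and v0: "v0 \<noteq> 0"
    and bm: "banach_module G \<rho>" and fd: "finite_dimensional_space TYPE('e)"
  shows "infinite_dimensional_in_H2b G \<rho> (split_cocycles G A B \<rho>)"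
proof -
  have lin: "\<And>g. g \<in> carrier G \<Longrightarrow> linear (\<rho> g)"
    and iso: "\<And>g v. g \<in> carrier G \<Longrightarrow> norm (\<rho> g v) = norm v"
    and rho_one: "\<rho> \<one> = id"
    and rho_mult: "\<And>g h. g \<in> carrier G \<Longrightarrow> h \<in> carrier G \<Longrightarrow> \<rho> (g \<otimes> h) = \<rho> g \<circ> \<rho> h"
    using bm unfolding banach_module_def by auto
  have rho_mult': "\<rho> (g \<otimes> h) v = \<rho> g (\<rho> h v)" if "g \<in> carrier G" "h \<in> carrier G" for g h v
    using rho_mult[OF that] by simp
  have rho0: "\<rho> g 0 = 0" if "g \<in> carrier G" for g using lin[OF that] by (simp add: linear_0)
  obtain S :: "'e set" where S: "finite S" "span S = UNIV"
    using fd unfolding finite_dimensional_space_def by blast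
  obtain Bs where Bs: "Bs \<subseteq> S" "independent Bs" "S \<subseteq> span Bs"
    by (rule maximal_independent_subset)
  have finBs: "finite Bs" using Bs(1) S(1) finite_subset by blast
  have spanBs: "span Bs = UNIV"
  proof -
    have "span S \<subseteq> span Bs" using span_mono[OF Bs(3)] by (simp add: span_span)
    then show ?thesis using S(2) by auto
  qed
  obtain K where K: "K > 0" "\<And>t. (\<Sum>b\<in>Bs. \<bar>t b\<bar>) \<le> K * norm (\<Sum>b\<in>Bs. t b *\<^sub>R b)"
    using coeff_bound[OF finBs Bs(2)] by blast
  interpret F: fdim_mod Bs K G \<rho>
  proof (rule fdim_mod.intro)
    show "fdim Bs K" by (rule fdim.intro) (use finBs spanBs K in auto)
    show "fdim_mod_axioms G \<rho>" by (rule fdim_mod_axioms.intro) (use lin iso rho_one rho_mult is_group in auto)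
  qed

  define pw where "pw k = a [^] (k::int)" for k
  have aC: "a \<in> carrier G" using A_carr[OF a] .
  have pwA: "pw k \<in> A" for k unfolding pw_def by (rule subgroup_int_pow_closed[OF subA a])
  have pwC: "pw k \<in> carrier G" for k using A_carr[OF pwA] .
  have pw_add: "pw (m + n) = pw m \<otimes> pw n" for m n unfolding pw_def by (rule int_pow_mult[OF aC])
  have pw_neg: "pw (- k) = inv (pw k)" for k unfolding pw_def by (rule int_pow_neg[OF aC])
  have pw_one: "k = 0" if "pw k = \<one>" for k
  proof (rule ccontr)
    assume k: "k \<noteq> 0"
    have pos: "pw m \<noteq> \<one>" if "m > 0" for m
    proof -
      have "int (nat m) = m" using that by simp
      then have "pw m = a [^] (int (nat m))" unfolding pw_def by simp
      then have "pw m = a [^] (nat m)" by (simp only: int_pow_int)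
      moreover have "nat m > 0" using that by simp
      then have "a [^] (nat m) \<noteq> \<one>" using ainf unfolding infinite_order_def by blast
      ultimately show ?thesis by simp
    qed
    show False
    proof (cases "k > 0")
      case True then show ?thesis using pos that by blast
    next
      case False
      then have "- k > 0" using k by simp
      moreover have "pw (- k) = \<one>" using that pw_neg by simp
      ultimately show ?thesis using pos by blast
    qed
  qed
  have pw_inj: "m = n" if "pw m = pw n" for m n
  proof -
    have "pw (m - n) = pw m \<otimes> inv (pw n)" unfolding pw_def by (rule int_pow_diff[OF aC])
    also have "\<dots> = \<one>" using that pwC by simp
    finally show ?thesis using pw_one by fastforce
  qed
  have pw_ne1: "pw k \<noteq> \<one>" if "k \<noteq> 0" for k using pw_one that by blast

  define kk where "kk i = 6 * int i + 1" for i :: nat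
  have kk_pos: "kk i > 0" for i by (simp add: kk_def)
  define fi where "fi i g = (if g = pw (kk i) then v0 else if g = pw (- kk i) then - \<rho> (pw (- kk i)) v0 else 0)"
    for i :: nat and g
  have fi_bound: "norm (fi i g) \<le> norm v0" for i g
    unfolding fi_def using iso[OF pwC] by auto
  have pw_inv_pair: "\<rho> (pw k) (\<rho> (pw (- k)) v) = v" for k v
  proof -
    have "\<rho> (pw k) (\<rho> (pw (- k)) v) = \<rho> (pw k \<otimes> pw (- k)) v" using rho_mult'[OF pwC pwC] by simp
    also have "pw k \<otimes> pw (- k) = \<one>" using pw_add[of k "- k"] by (simp add: pw_def)
    also have "\<rho> \<one> v = v" by (simp add: rho_one)
    finally show ?thesis .
  qed
  have fi_alt: "fi i g + \<rho> g (fi i (inv g)) = 0" if g: "g \<in> A" for i g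
  proof -
    define k where "k = kk i"
    have k0: "k \<noteq> 0" using kk_pos[of i] by (simp add: k_def)
    have dist: "pw k \<noteq> pw (- k)" using pw_inj k0 by fastforce
    have gC: "g \<in> carrier G" using A_carr[OF g] .
    show ?thesis
    proof (cases "g = pw k")
      case True
      have "inv g = pw (- k)" using True pw_neg by simp
      then show ?thesis using True dist unfolding fi_def k_def[symmetric]
        by (simp add: linear_neg[OF lin[OF pwC]] pw_inv_pair)
    next
      case False
      note F1 = False
      show ?thesis
      proof (cases "g = pw (- k)")
        case True
        have "inv g = pw k" using True pw_neg[of "- k"] by simp
        then show ?thesis using True dist unfolding fi_def k_def[symmetric] by simp
      next
        case False
        have "inv g \<noteq> pw k"
        proof
          assume "inv g = pw k"
          then have "g = inv (pw k)" using gC by (metis inv_inv)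
          then show False using False pw_neg by simp
        qed
        moreover have "inv g \<noteq> pw (- k)"
        proof
          assume "inv g = pw (- k)"
          then have "g = inv (pw (- k))" using gC by (metis inv_inv)
          then have "g = pw k" using pw_neg[of "- k"] by simp
          then show False using F1 by simp
        qed
        ultimately show ?thesis using F1 False unfolding fi_def k_def[symmetric] by (simp add: rho0[OF gC])
      qed
    qed
  qed
  define SQ where "SQ i = split_quasicocycle G A B \<rho> (fi i) (\<lambda>_. 0)" for i
  define cc where "cc i = cob1 G \<rho> (SQ i)" for i
  have cc_in: "cc i \<in> split_cocycles G A B \<rho>" for i
  proof -
    have q1: "quasicocycle G A \<rho> (fi i)" unfolding quasicocycle_def
    proof (intro exI ballI)
      fix g h assume g: "g \<in> A" and h: "h \<in> A"
      have "norm (fi i (g \<otimes> h) - fi i g - \<rho> g (fi i h)) \<le> norm (fi i (g \<otimes> h)) + norm (fi i g) + norm (\<rho> g (fi i h))"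
      proof -
        have "norm (fi i (g \<otimes> h) - fi i g - \<rho> g (fi i h)) \<le> norm (fi i (g \<otimes> h) - fi i g) + norm (\<rho> g (fi i h))"
          by (rule norm_triangle_ineq4)
        moreover have "norm (fi i (g \<otimes> h) - fi i g) \<le> norm (fi i (g \<otimes> h)) + norm (fi i g)"
          by (rule norm_triangle_ineq4)
        ultimately show ?thesis by linarith
      qed
      also have "\<dots> \<le> 3 * norm v0"
        using fi_bound[of i "g \<otimes> h"] fi_bound[of i g] fi_bound[of i h] iso[OF A_carr[OF g], of "fi i h"] by linarith
      finally show "norm (fi i (g \<otimes> h) - fi i g - \<rho> g (fi i h)) \<le> 3 * norm v0" .
    qed
    have a1: "alternating G A \<rho> (fi i)" unfolding alternating_def using fi_alt by blast
    have q2: "quasicocycle G B \<rho> (\<lambda>_. 0)" unfolding quasicocycle_def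
      by (rule exI[of _ 0]) (auto simp: rho0 B_carr)
    have a2: "alternating G B \<rho> (\<lambda>_. 0)" unfolding alternating_def by (auto simp: rho0 B_carr)
    show ?thesis unfolding split_cocycles_def cc_def SQ_def alt_quasicocycle_def
      using q1 a1 q2 a2 by blast
  qed
  show ?thesis
    unfolding infinite_dimensional_in_H2b_def
  proof (intro allI)
    fix n :: nat
    show "\<exists>c :: nat \<Rightarrow> 'g \<times> 'g \<Rightarrow> 'e. (\<forall>i<n. c i \<in> split_cocycles G A B \<rho>) \<and>
        (\<forall>a :: nat \<Rightarrow> real. (\<lambda>x. \<Sum>i<n. a i *\<^sub>R c i x) \<in> bounded_coboundaries2 G \<rho> \<longrightarrow> (\<forall>i<n. a i = 0))"
    proof (rule exI[of _ cc], intro conjI)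
    show "\<forall>i<n. cc i \<in> split_cocycles G A B \<rho>" using cc_in by blast
    show "\<forall>al :: nat \<Rightarrow> real. (\<lambda>x. \<Sum>i<n. al i *\<^sub>R cc i x) \<in> bounded_coboundaries2 G \<rho> \<longrightarrow> (\<forall>i<n. al i = 0)"
    proof (rule allI, rule impI)
      fix al :: "nat \<Rightarrow> real"
      assume mem: "(\<lambda>x. \<Sum>i<n. al i *\<^sub>R cc i x) \<in> bounded_coboundaries2 G \<rho>"
      show "\<forall>i<n. al i = 0"
      proof (rule ccontr)
        assume "\<not> (\<forall>i<n. al i = 0)"
        then obtain j where j: "j < n" "al j \<noteq> 0" by blast
        from mem obtain \<phi> C where \<phi>b: "\<And>g. g \<in> carrier G \<Longrightarrow> norm (\<phi> g) \<le> C"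
          and eq: "\<And>g h. g \<in> carrier G \<Longrightarrow> h \<in> carrier G \<Longrightarrow>
                    (\<Sum>i<n. al i *\<^sub>R cc i (g, h)) = cob1 G \<rho> \<phi> (g, h)"
          unfolding bounded_coboundaries2_def by blast
        define Fq where "Fq g = (\<Sum>i<n. al i *\<^sub>R SQ i g)" for g
        define f where "f g = (\<Sum>i<n. al i *\<^sub>R fi i g)" for g
        have rho_sum: "\<rho> g (\<Sum>i<n. al i *\<^sub>R X i) = (\<Sum>i<n. al i *\<^sub>R \<rho> g (X i))" if g: "g \<in> carrier G" for g X
          using lin[OF g] by (simp add: linear_sum linear_scale)
        have eqF: "Fq g + \<rho> g (Fq h) - Fq (g \<otimes> h) = \<phi> g + \<rho> g (\<phi> h) - \<phi> (g \<otimes> h)"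
          if g: "g \<in> carrier G" and h: "h \<in> carrier G" for g h
        proof -
          have "(\<Sum>i<n. al i *\<^sub>R cc i (g, h)) = (\<Sum>i<n. al i *\<^sub>R SQ i g + al i *\<^sub>R \<rho> g (SQ i h) - al i *\<^sub>R SQ i (g \<otimes> h))"
            unfolding cc_def cob1_def by (simp add: scaleR_diff_right scaleR_add_right)
          also have "\<dots> = Fq g + \<rho> g (Fq h) - Fq (g \<otimes> h)"
            unfolding Fq_def rho_sum[OF g] by (simp add: sum.distrib sum_subtractf)
          finally show ?thesis using eq[OF g h] unfolding cob1_def by simp
        qed
        define z where "z g = Fq g - \<phi> g" for g
        have zco: "z (g \<otimes> h) = z g + \<rho> g (z h)" if g: "g \<in> carrier G" and h: "h \<in> carrier G" for g h
        proof -
          have e: "Fq (g \<otimes> h) - \<phi> (g \<otimes> h) = (Fq g - \<phi> g) + (\<rho> g (Fq h) - \<rho> g (\<phi> h))"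
            using eqF[OF g h] by (simp add: algebra_simps)
          have r: "\<rho> g (Fq h) - \<rho> g (\<phi> h) = \<rho> g (Fq h - \<phi> h)" using lin[OF g] by (simp add: linear_diff)
          show ?thesis unfolding z_def using e r by simp
        qed
        define W where "W xs = word_prod G (bw b0 xs)" for xs
        have WC: "W xs \<in> carrier G" if "set xs \<subseteq> A - {\<one>}" for xs
          unfolding W_def using bw_carr[OF b0(1)] that by blast
        have Fblock: "Fq (W (x # xs)) = f x + \<rho> (x \<otimes> b0) (Fq (W xs))"
          if x: "x \<in> A - {\<one>}" and xs: "set xs \<subseteq> A - {\<one>}" for x xs
        proof -
          have xb: "x \<otimes> b0 \<in> carrier G" using x b0 A_carr B_carr by blast
          have "Fq (W (x # xs)) = (\<Sum>i<n. al i *\<^sub>R (fi i x + \<rho> (x \<otimes> b0) (SQ i (W xs))))"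
            unfolding Fq_def W_def SQ_def
            using split_word_bw[OF b0 _ _ xs lin rho_mult] x by simp
          also have "\<dots> = f x + \<rho> (x \<otimes> b0) (Fq (W xs))"
            unfolding f_def Fq_def rho_sum[OF xb] by (simp add: scaleR_add_right sum.distrib)
          finally show ?thesis .
        qed
        define Om where "Om = {\<phi> (W xs) | xs. set xs \<subseteq> A - {\<one>}}"
        define wf where "wf x = f x - z (x \<otimes> b0)" for x
        have "\<exists>p. \<forall>x\<in>A - {\<one>}. wf x + \<rho> (x \<otimes> b0) p = p"
        proof (rule F.fixed_point[where Om = Om and R = C])
          have "set [] \<subseteq> A - {\<one>}" by simp
          then show "Om \<noteq> {}" unfolding Om_def by blast
          show "norm v \<le> C" if "v \<in> Om" for v using that \<phi>b WC unfolding Om_def by blast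
          show "x \<otimes> b0 \<in> carrier G" if "x \<in> A - {\<one>}" for x using that b0 A_carr B_carr by blast
          show "wf x + \<rho> (x \<otimes> b0) v \<in> Om" if x: "x \<in> A - {\<one>}" and v: "v \<in> Om" for x v
          proof -
            obtain xs where xs: "set xs \<subseteq> A - {\<one>}" and vx: "v = \<phi> (W xs)" using v unfolding Om_def by blast
            have xb: "x \<otimes> b0 \<in> carrier G" using x b0 A_carr B_carr by blast
            have Wc: "W (x # xs) = (x \<otimes> b0) \<otimes> W xs" unfolding W_def
              using bw_prod[OF b0(1)] x xs by auto
            have "\<phi> (W (x # xs)) = Fq (W (x # xs)) - z (W (x # xs))" unfolding z_def by simp
            also have "\<dots> = f x + \<rho> (x \<otimes> b0) (Fq (W xs)) - (z (x \<otimes> b0) + \<rho> (x \<otimes> b0) (z (W xs)))"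
              using Fblock[OF x xs] zco[OF xb WC[OF xs]] Wc by simp
            also have "\<dots> = wf x + \<rho> (x \<otimes> b0) (Fq (W xs) - z (W xs))"
              unfolding wf_def using lin[OF xb] by (simp add: linear_diff algebra_simps)
            also have "Fq (W xs) - z (W xs) = v" unfolding vx z_def by simp
            finally have "wf x + \<rho> (x \<otimes> b0) v = \<phi> (W (x # xs))" by simp
            moreover have "set (x # xs) \<subseteq> A - {\<one>}" using x xs by simp
            ultimately show ?thesis unfolding Om_def by blast
          qed
        qed
        then obtain p where p: "\<And>x. x \<in> A - {\<one>} \<Longrightarrow> wf x + \<rho> (x \<otimes> b0) p = p" by blast
        define Z where "Z g = z g + p - \<rho> g p" for g
        have Zco: "Z (g \<otimes> h) = Z g + \<rho> g (Z h)" if g: "g \<in> carrier G" and h: "h \<in> carrier G" for g h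
        proof -
          have "\<rho> g (Z h) = \<rho> g (z h) + \<rho> g p - \<rho> (g \<otimes> h) p"
            unfolding Z_def rho_mult'[OF g h] using lin[OF g] by (simp add: linear_diff linear_add)
          then show ?thesis unfolding Z_def zco[OF g h] by (simp add: algebra_simps)
        qed
        have Z1: "Z \<one> = 0" using Zco[OF one_closed one_closed] by (simp add: rho_one)
        have fZ: "f x = Z x + \<rho> x (Z b0)" if x: "x \<in> A - {\<one>}" for x
        proof -
          have xC: "x \<in> carrier G" using x A_carr by blast
          have "f x = Z (x \<otimes> b0)" using p[OF x] unfolding wf_def Z_def by (simp add: algebra_simps)
          then show ?thesis using Zco[OF xC B_carr[OF b0(1)]] by simp
        qed
        have f_alt: "f x + \<rho> x (f (inv x)) = 0" if x: "x \<in> A" for x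
        proof -
          have "f x + \<rho> x (f (inv x)) = (\<Sum>i<n. al i *\<^sub>R (fi i x + \<rho> x (fi i (inv x))))"
            unfolding f_def rho_sum[OF A_carr[OF x]] by (simp add: scaleR_add_right sum.distrib)
          also have "\<dots> = 0" using fi_alt[OF x] by simp
          finally show ?thesis .
        qed
        define wv where "wv = Z b0"
        have rw: "\<rho> x wv = - wv" if x: "x \<in> A - {\<one>}" for x
        proof -
          have xC: "x \<in> carrier G" using x A_carr by blast
          have ixA: "inv x \<in> A" using x subgroup.m_inv_closed[OF subA] by blast
          have "inv x \<noteq> \<one>" using x inv_eq_1_iff[OF xC] by simp
          then have ix: "inv x \<in> A - {\<one>}" using ixA by simp
          have ixC: "inv x \<in> carrier G" using xC by simp
          have "0 = f x + \<rho> x (f (inv x))" using f_alt x by simp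
          also have "\<dots> = Z x + \<rho> x wv + (\<rho> x (Z (inv x)) + \<rho> (x \<otimes> inv x) wv)"
            unfolding fZ[OF x] fZ[OF ix] wv_def rho_mult'[OF xC ixC] using lin[OF xC] by (simp add: linear_add)
          also have "\<dots> = Z (x \<otimes> inv x) + \<rho> x wv + wv"
            unfolding Zco[OF xC ixC] using xC by (simp add: rho_one)
          also have "\<dots> = \<rho> x wv + wv" using xC Z1 by simp
          finally show ?thesis by (simp add: eq_neg_iff_add_eq_0)
        qed
        define k where "k = kk j"
        have k0: "k \<noteq> 0" using kk_pos[of j] by (simp add: k_def)
        have x1: "pw k \<in> A - {\<one>}" using pwA pw_ne1 k0 by simp
        have x2: "pw (k + k) \<in> A - {\<one>}" using pwA pw_ne1 k0 by simp
        have "\<rho> (pw (k + k)) wv = \<rho> (pw k) (\<rho> (pw k) wv)" unfolding pw_add rho_mult'[OF pwC pwC] ..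
        also have "\<dots> = wv" using rw[OF x1] lin[OF pwC] by (simp add: linear_neg)
        finally have "wv = - wv" using rw[OF x2] by simp
        then have "wv + wv = 0" by (simp add: eq_neg_iff_add_eq_0)
        then have "(2::real) *\<^sub>R wv = 0" by (simp add: scaleR_2)
        then have wv0: "wv = 0" by simp
        have fZ': "f x = Z x" if "x \<in> A - {\<one>}" for x
          using fZ[OF that] rho0 A_carr that unfolding wv_def[symmetric] wv0 by auto
        have f1: "f (pw k) = al j *\<^sub>R v0"
        proof -
          have "fi i (pw k) = (if i = j then v0 else 0)" for i
          proof (cases "i = j")
            case True then show ?thesis by (simp add: fi_def k_def)
          next
            case False
            have "k \<noteq> kk i" using False by (simp add: k_def kk_def)
            moreover have "k \<noteq> - kk i" using kk_pos[of i] kk_pos[of j] by (simp add: k_def)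
            ultimately show ?thesis using False pw_inj unfolding fi_def by metis
          qed
          then have "f (pw k) = (\<Sum>i<n. if i = j then al i *\<^sub>R v0 else 0)" unfolding f_def
            by (intro sum.cong refl) simp
          then show ?thesis using j(1) by simp
        qed
        have fzero: "f (pw m) = 0" if "\<And>i. m \<noteq> kk i \<and> m \<noteq> - kk i" for m
        proof -
          have "fi i (pw m) = 0" for i using that[of i] pw_inj unfolding fi_def by metis
          then show ?thesis unfolding f_def by simp
        qed
        have f2: "f (pw (k + k)) = 0"
        proof (rule fzero)
          fix i show "k + k \<noteq> kk i \<and> k + k \<noteq> - kk i"
            using kk_pos[of i] kk_pos[of j] unfolding k_def kk_def by presburger
        qed
        have f3: "f (pw (k + k + k)) = 0"
        proof (rule fzero)
          fix i show "k + k + k \<noteq> kk i \<and> k + k + k \<noteq> - kk i"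
            using kk_pos[of i] kk_pos[of j] unfolding k_def kk_def by presburger
        qed
        have x3: "pw (k + k + k) \<in> A - {\<one>}" using pwA pw_ne1 k0 by simp
        have "0 = Z (pw (k + k + k))" using f3 fZ'[OF x3] by simp
        also have "\<dots> = Z (pw (k + k)) + \<rho> (pw (k + k)) (Z (pw k))" unfolding pw_add[of "k + k" k] by (rule Zco[OF pwC pwC])
        also have "\<dots> = \<rho> (pw (k + k)) (al j *\<^sub>R v0)" using fZ'[OF x2] fZ'[OF x1] f1 f2 by simp
        finally have "norm (al j *\<^sub>R v0) = 0" using iso[OF pwC] by (metis norm_zero)
        then show False using j(2) v0 by simp
      qed
    qed
    qed
  qed
qed

end

theorem theorem2p2:
  fixes G :: "('g, 'b) monoid_scheme" and A B :: "'g set"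
    and \<rho> :: "'g \<Rightarrow> 'e::banach \<Rightarrow> 'e"
  assumes "group G"
    and "finitely_generated G"
    and "free_product_splitting G A B"
    and "A \<noteq> {\<one>\<^bsub>G\<^esub>}" and "B \<noteq> {\<one>\<^bsub>G\<^esub>}"
    and "\<exists>a\<in>A. infinite_order G a"
    and "banach_module G \<rho>"
    and "finite_dimensional_space TYPE('e)"
    and "\<exists>v::'e. v \<noteq> 0"
  shows "infinite_dimensional_in_H2b G \<rho> (split_cocycles G A B \<rho>)"
proof -
  interpret S: splitting G A B
    using assms(1,3) by (simp add: splitting_def splitting_axioms_def)
  obtain a where a: "a \<in> A" "infinite_order G a" using assms(6) by blast
  have "\<one>\<^bsub>G\<^esub> \<in> B" by (rule S.one_B)
  then obtain b0 where b0: "b0 \<in> B" "b0 \<noteq> \<one>\<^bsub>G\<^esub>" using assms(5) by blast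
  obtain v0 :: 'e where v0: "v0 \<noteq> 0" using assms(9) by blast
  show ?thesis by (rule S.main_result[OF a b0 v0 assms(7,8)])
qed

end
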